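(* For every $m\ge3$ there is a subgroup $G\subset\mathrm{Sp}_{2m}(\mathbb{F}_2)$ such that (a) no quadratic form of Arf invariant $0$ with polar form $\langle,\rangle$ is fixed by all elements of $G$, and (b) for every $g\in G$ there is a quadratic form of Arf invariant $0$ with polar form $\langle,\rangle$ fixed by $g$.
   Context: $\langle,\rangle$ is the standard alternating form on $\mathbb{F}_2^{\oplus2m}$ ($\langle e_i,e_j\rangle=\langle f_i,f_j\rangle=0$, $\langle e_i,f_j\rangle=\langle f_j,e_i\rangle=\delta_{ij}$), and $\mathrm{Sp}_{2m}(\mathbb{F}_2)$ its automorphism group. A quadratic form with polar form $\langle,\rangle$ is $Q$ with $Q(x+y)-Q(x)-Q(y)=\langle x,y\rangle$; $\mathrm{Sp}_{2m}(\mathbb{F}_2)$ acts by $(g\cdot Q)(x)=Q(g^{-1}x)$. The Arf invariant of $Q$ is $\sum_i Q(e_i)Q(f_i)$ for a symplectic basis, equivalently the $a$ with $\#\{x:Q(x)=a\}=2^{m-1}(2^m+1)$. *)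

theory Defs
  imports "HOL-Library.Z2" "HOL-Algebra.Bij"
begin

text \<open>Vectors of F_2^(2m): functions nat => bit vanishing outside {0..<2m}.
  Coordinate i < m is the coefficient of e_i, coordinate m+i that of f_i.\<close>

definition vecs :: "nat \<Rightarrow> (nat \<Rightarrow> bit) set" where
  "vecs m = {x. \<forall>i. 2 * m \<le> i \<longrightarrow> x i = 0}"

definition vadd :: "(nat \<Rightarrow> bit) \<Rightarrow> (nat \<Rightarrow> bit) \<Rightarrow> (nat \<Rightarrow> bit)" where
  "vadd x y = (\<lambda>i. x i + y i)"

definition sform :: "nat \<Rightarrow> (nat \<Rightarrow> bit) \<Rightarrow> (nat \<Rightarrow> bit) \<Rightarrow> bit" where
  "sform m x y = (\<Sum>i<m. x i * y (m + i) + x (m + i) * y i)"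

definition ebas :: "nat \<Rightarrow> nat \<Rightarrow> bit" where
  "ebas i = (\<lambda>j. if j = i then 1 else 0)"

definition fbas :: "nat \<Rightarrow> nat \<Rightarrow> nat \<Rightarrow> bit" where
  "fbas m i = (\<lambda>j. if j = m + i then 1 else 0)"

definition Sp :: "nat \<Rightarrow> ((nat \<Rightarrow> bit) \<Rightarrow> (nat \<Rightarrow> bit)) set" where
  "Sp m = {g \<in> Bij (vecs m).
     (\<forall>x\<in>vecs m. \<forall>y\<in>vecs m. g (vadd x y) = vadd (g x) (g y)) \<and>
     (\<forall>x\<in>vecs m. \<forall>y\<in>vecs m. sform m (g x) (g y) = sform m x y)}"

definition Sp_group :: "nat \<Rightarrow> ((nat \<Rightarrow> bit) \<Rightarrow> (nat \<Rightarrow> bit)) monoid" where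
  "Sp_group m = (BijGroup (vecs m)) \<lparr>carrier := Sp m\<rparr>"

definition quad_form :: "nat \<Rightarrow> ((nat \<Rightarrow> bit) \<Rightarrow> bit) \<Rightarrow> bool" where
  "quad_form m Q \<longleftrightarrow>
     (\<forall>x\<in>vecs m. \<forall>y\<in>vecs m. Q (vadd x y) - Q x - Q y = sform m x y)"

definition arf :: "nat \<Rightarrow> ((nat \<Rightarrow> bit) \<Rightarrow> bit) \<Rightarrow> bit" where
  "arf m Q = (\<Sum>i<m. Q (ebas i) * Q (fbas m i))"

definition fixes_form :: "nat \<Rightarrow> ((nat \<Rightarrow> bit) \<Rightarrow> (nat \<Rightarrow> bit)) \<Rightarrow> ((nat \<Rightarrow> bit) \<Rightarrow> bit) \<Rightarrow> bool" where
  "fixes_form m g Q \<longleftrightarrow> (\<forall>x\<in>vecs m. Q (inv_into (vecs m) g x) = Q x)"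

end

theory Submission imports Defs begin
declare add_bit_eq_xor[simp del] mult_bit_eq_and[simp del]

definition M :: "nat \<Rightarrow> bit \<Rightarrow> bit \<Rightarrow> bit \<Rightarrow> (nat \<Rightarrow> bit) \<Rightarrow> (nat \<Rightarrow> bit)" where
 "M m s t u x = (\<lambda>i. if i = 0 then x 0 + s * x m + t * x (m+1)
     else if i = 1 then x 1 + t * x m + u * x (m+1) else x i)"

definition Mr :: "nat \<Rightarrow> bit \<Rightarrow> bit \<Rightarrow> bit \<Rightarrow> (nat \<Rightarrow> bit) \<Rightarrow> (nat \<Rightarrow> bit)" where
 "Mr m s t u = restrict (M m s t u) (vecs m)"

lemma bit_dbl: "(a::bit) + a = 0" by (cases a) simp_all

lemma M_vecs: "2 \<le> m \<Longrightarrow> x \<in> vecs m \<Longrightarrow> M m s t u x \<in> vecs m"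
  by (auto simp: vecs_def M_def)

lemma vadd_vecs: "x \<in> vecs m \<Longrightarrow> y \<in> vecs m \<Longrightarrow> vadd x y \<in> vecs m"
  by (auto simp: vecs_def vadd_def)

lemma M_M: "2 \<le> m \<Longrightarrow> M m s t u (M m s' t' u' x) = M m (s+s') (t+t') (u+u') x"
  unfolding M_def by (rule ext) (auto simp: algebra_simps)

lemma M_0: "M m 0 0 0 x = x"
  unfolding M_def by auto

lemma M_invol: "2 \<le> m \<Longrightarrow> M m s t u (M m s t u x) = x"
  by (simp add: M_M bit_dbl M_0)

lemma M_bij: "2 \<le> m \<Longrightarrow> bij_betw (M m s t u) (vecs m) (vecs m)"
  by (rule bij_betw_byWitness[where f'="M m s t u"]) (auto simp: M_invol M_vecs)

lemma Mr_Bij: "2 \<le> m \<Longrightarrow> Mr m s t u \<in> Bij (vecs m)"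
  unfolding Bij_def Mr_def using M_bij[of m s t u]
  by (auto simp: bij_betw_cong[of "vecs m" "restrict (M m s t u) (vecs m)" "M m s t u"])

lemma M_vadd: "M m s t u (vadd x y) = vadd (M m s t u x) (M m s t u y)"
  unfolding M_def vadd_def by (rule ext) (auto simp: algebra_simps)

lemma sum_split: "2 \<le> (m::nat) \<Longrightarrow> (\<Sum>i<m. f i) = f 0 + f 1 + (\<Sum>i\<in>{2..<m}. f i)"
proof -
  assume "2 \<le> m"
  then have "{..<m} = insert 0 (insert 1 {2..<m})" by auto
  then show ?thesis by (simp add: add.assoc)
qed

lemma bitid: "(x0::bit) * ym + xm * y0 + (x1 * ym1 + xm1*y1) = (x0 + s*xm + t*xm1) * ym + xm * (y0 + s*ym + t*ym1) + ((x1 + t*xm + u*xm1)*ym1 + xm1*(y1 + t*ym + u*ym1))"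
proof -
  have "(x0 + s*xm + t*xm1) * ym + xm * (y0 + s*ym + t*ym1) + ((x1 + t*xm + u*xm1)*ym1 + xm1*(y1 + t*ym + u*ym1)) = x0 * ym + xm * y0 + (x1 * ym1 + xm1*y1) + 2 * (s*xm*ym + t*xm1*ym + t*xm*ym1 + u*xm1*ym1)" by algebra
  then show ?thesis by simp
qed


lemma M_sform: "2 \<le> m \<Longrightarrow> sform m (M m s t u x) (M m s t u y) = sform m x y"
  unfolding sform_def
  apply (simp add: sum_split)
  apply (subst sum.cong[OF refl, where h="\<lambda>i. x i * y (m + i) + x (m + i) * y i"])
   apply (simp add: M_def)
  apply (simp add: M_def)
  using bitid[of "x 0" "y m" "x m" "y 0" "x 1" "y (Suc m)" "x (Suc m)" "y 1" s t u]
  by (simp add: add.assoc)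


lemma Mr_apply: "x \<in> vecs m \<Longrightarrow> Mr m s t u x = M m s t u x"
  by (simp add: Mr_def)

lemma Mr_Sp: "2 \<le> m \<Longrightarrow> Mr m s t u \<in> Sp m"
  unfolding Sp_def using Mr_Bij[of m s t u]
  by (auto simp: Mr_apply vadd_vecs M_vadd M_vecs M_sform)

lemma Sp_group_mult: "mult (Sp_group m) = mult (BijGroup (vecs m))"
  by (simp add: Sp_group_def)

lemma Sp_group_one: "one (Sp_group m) = one (BijGroup (vecs m))"
  by (simp add: Sp_group_def)

lemma Sp_group_carrier: "carrier (Sp_group m) = Sp m"
  by (simp add: Sp_group_def)

lemma Mr_mult: "2 \<le> m \<Longrightarrow> Mr m s t u \<otimes>\<^bsub>BijGroup (vecs m)\<^esub> Mr m s' t' u' = Mr m (s+s') (t+t') (u+u')"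
  apply (simp add: BijGroup_def Mr_Bij)
  apply (rule ext)
  apply (simp add: compose_def Mr_def M_vecs M_M)
  done

lemma Mr_one: "\<one>\<^bsub>BijGroup (vecs m)\<^esub> = Mr m 0 0 0"
  by (auto simp: BijGroup_def Mr_def restrict_def M_0 fun_eq_iff)

lemma Mr_inv: "2 \<le> m \<Longrightarrow> inv\<^bsub>Sp_group m\<^esub> (Mr m s t u) = Mr m s t u"
proof -
  assume m: "2 \<le> m"
  interpret B: group "BijGroup (vecs m)" by (rule group_BijGroup)
  let ?g = "Mr m s t u"
  have gg: "?g \<otimes>\<^bsub>BijGroup (vecs m)\<^esub> ?g = \<one>\<^bsub>BijGroup (vecs m)\<^esub>"
    using m by (simp add: Mr_mult Mr_one bit_dbl)
  have gB: "?g \<in> carrier (BijGroup (vecs m))" using Mr_Bij[OF m] by (simp add: BijGroup_def)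
  have invB: "inv\<^bsub>BijGroup (vecs m)\<^esub> ?g = ?g" by (rule B.inv_equality) (use gg gB in auto)
  show ?thesis unfolding m_inv_def
  proof (rule the_equality)
    show "?g \<in> carrier (Sp_group m) \<and> ?g \<otimes>\<^bsub>Sp_group m\<^esub> ?g = \<one>\<^bsub>Sp_group m\<^esub> \<and> ?g \<otimes>\<^bsub>Sp_group m\<^esub> ?g = \<one>\<^bsub>Sp_group m\<^esub>"
      using gg Mr_Sp[OF m] by (simp add: Sp_group_mult Sp_group_one Sp_group_carrier)
  next
    fix y assume y: "y \<in> carrier (Sp_group m) \<and> ?g \<otimes>\<^bsub>Sp_group m\<^esub> y = \<one>\<^bsub>Sp_group m\<^esub> \<and> y \<otimes>\<^bsub>Sp_group m\<^esub> ?g = \<one>\<^bsub>Sp_group m\<^esub>"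
    then have yB: "y \<in> carrier (BijGroup (vecs m))"
      by (auto simp: Sp_group_carrier Sp_def BijGroup_def)
    have "inv\<^bsub>BijGroup (vecs m)\<^esub> ?g = y" by (rule B.inv_equality) (use y yB gB in \<open>auto simp: Sp_group_mult Sp_group_one\<close>)
    with invB show "y = ?g" by simp
  qed
qed

definition GG :: "nat \<Rightarrow> ((nat \<Rightarrow> bit) \<Rightarrow> (nat \<Rightarrow> bit)) set" where
  "GG m = {Mr m s t u | s t u. True}"

lemma GG_subgroup: "2 \<le> m \<Longrightarrow> subgroup (GG m) (Sp_group m)"
proof (rule subgroup.intro)
  assume m: "2 \<le> m"
  show "GG m \<subseteq> carrier (Sp_group m)" using Mr_Sp[OF m] by (auto simp: GG_def Sp_group_carrier)
  show "\<And>x y. x \<in> GG m \<Longrightarrow> y \<in> GG m \<Longrightarrow> x \<otimes>\<^bsub>Sp_group m\<^esub> y \<in> GG m"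
    using m by (auto simp: GG_def Sp_group_mult Mr_mult) blast
  show "\<one>\<^bsub>Sp_group m\<^esub> \<in> GG m" by (auto simp: GG_def Sp_group_one Mr_one)
  show "\<And>x. x \<in> GG m \<Longrightarrow> inv\<^bsub>Sp_group m\<^esub> x \<in> GG m"
    using m by (auto simp: GG_def Mr_inv) blast
qed

lemma Mr_inj: "2 \<le> m \<Longrightarrow> inj_on (Mr m s t u) (vecs m)"
  using Mr_Bij[of m s t u] by (simp add: Bij_def bij_betw_def)

lemma fix_apply: "2 \<le> m \<Longrightarrow> fixes_form m (Mr m s t u) Q \<Longrightarrow> y \<in> vecs m \<Longrightarrow> Q (M m s t u y) = Q y"
proof -
  assume m: "2 \<le> m" and f: "fixes_form m (Mr m s t u) Q" and y: "y \<in> vecs m"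
  have "Q (inv_into (vecs m) (Mr m s t u) (M m s t u y)) = Q (M m s t u y)"
    using f M_vecs[OF m y] by (simp add: fixes_form_def)
  moreover have "inv_into (vecs m) (Mr m s t u) (M m s t u y) = y"
    using inv_into_f_f[OF Mr_inj[OF m] y] y by (simp add: Mr_apply)
  ultimately show ?thesis by simp
qed

lemma ebas_vecs: "i < 2*m \<Longrightarrow> ebas i \<in> vecs m" by (auto simp: vecs_def ebas_def)
lemma fbas_vecs: "i < m \<Longrightarrow> fbas m i \<in> vecs m" by (auto simp: vecs_def fbas_def)

lemma zero_sum2: "(\<Sum>i\<in>{2..<m}. (0::bit)) = 0" by simp


lemma sform_basis:
  assumes m: "2 \<le> m"
  shows "sform m (fbas m 0) (vadd (ebas 0) (ebas 1)) = 1"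
    "sform m (fbas m 0) (ebas 0) = 1"
    "sform m (fbas m 1) (ebas 1) = 1"
    "sform m (ebas 0) (ebas 1) = 0"
  using m by (simp_all add: sform_def sum_split fbas_def ebas_def vadd_def)

lemma M_basis:
  assumes m: "2 \<le> m"
  shows "M m 1 1 1 (fbas m 0) = vadd (fbas m 0) (vadd (ebas 0) (ebas 1))"
    "M m 1 0 1 (fbas m 0) = vadd (fbas m 0) (ebas 0)"
    "M m 1 0 1 (fbas m 1) = vadd (fbas m 1) (ebas 1)"
  using m by (auto simp: M_def fbas_def ebas_def vadd_def fun_eq_iff)

lemma partA:
  assumes m: "2 \<le> m" and Q: "quad_form m Q"
    and f1: "fixes_form m (Mr m 1 1 1) Q" and f2: "fixes_form m (Mr m 1 0 1) Q"
  shows False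
proof -
  have v: "fbas m 0 \<in> vecs m" "fbas m 1 \<in> vecs m" "ebas 0 \<in> vecs m" "ebas 1 \<in> vecs m"
    using m by (auto intro: fbas_vecs ebas_vecs)
  have v2: "vadd (ebas 0) (ebas 1) \<in> vecs m" using v by (simp add: vadd_vecs)
  have a1: "Q (vadd (fbas m 0) (vadd (ebas 0) (ebas 1))) = Q (fbas m 0)"
    using fix_apply[OF m f1 v(1)] M_basis[OF m] by simp
  have a2: "Q (vadd (fbas m 0) (ebas 0)) = Q (fbas m 0)"
    using fix_apply[OF m f2 v(1)] M_basis[OF m] by simp
  have a3: "Q (vadd (fbas m 1) (ebas 1)) = Q (fbas m 1)"
    using fix_apply[OF m f2 v(2)] M_basis[OF m] by simp
  have q1: "Q (vadd (ebas 0) (ebas 1)) = 1"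
    using Q[unfolded quad_form_def, rule_format, OF v(1) v2] a1 sform_basis[OF m] by simp
  have q2: "Q (ebas 0) = 1"
    using Q[unfolded quad_form_def, rule_format, OF v(1) v(3)] a2 sform_basis[OF m] by simp
  have q3: "Q (ebas 1) = 1"
    using Q[unfolded quad_form_def, rule_format, OF v(2) v(4)] a3 sform_basis[OF m] by simp
  show False
    using Q[unfolded quad_form_def, rule_format, OF v(3) v(4)] q1 q2 q3 sform_basis[OF m] by simp
qed

definition Qf :: "nat \<Rightarrow> bit \<Rightarrow> bit \<Rightarrow> (nat \<Rightarrow> bit) \<Rightarrow> bit" where
  "Qf m c0 c1 x = (\<Sum>i<m. x i * x (m+i)) + c0 * x 0 + c1 * x 1"

lemma Qf_quad: "quad_form m (Qf m c0 c1)"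
  unfolding quad_form_def
proof (intro ballI)
  fix x y assume "x \<in> vecs m" "y \<in> vecs m"
  have s: "(\<Sum>i<m. (x i + y i) * (x (m+i) + y (m+i))) = (\<Sum>i<m. x i * x (m+i)) + (\<Sum>i<m. y i * y (m+i)) + sform m x y"
    unfolding sform_def sum.distrib[symmetric] by (rule sum.cong) (simp_all add: algebra_simps)
  show "Qf m c0 c1 (vadd x y) - Qf m c0 c1 x - Qf m c0 c1 y = sform m x y"
    unfolding Qf_def vadd_def using s by (simp add: algebra_simps)
qed

lemma Qf_arf: "2 \<le> m \<Longrightarrow> arf m (Qf m c0 c1) = 0"
  unfolding arf_def Qf_def
  by (intro sum.neutral) (auto simp: fbas_def)

lemma bit_sq: "(a::bit) * a = a" by (cases a) simp_all

lemma Qf_M: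
  assumes m: "2 \<le> m" and h1: "s + s*c0 + t*c1 = 0" and h2: "u + c0*t + c1*u = 0"
  shows "Qf m c0 c1 (M m s t u x) = Qf m c0 c1 x"
proof -
  have e: "(\<Sum>i\<in>{2..<m}. M m s t u x i * M m s t u x (m+i)) = (\<Sum>i\<in>{2..<m}. x i * x (m+i))"
    by (rule sum.cong) (auto simp: M_def)
  have alg: "\<And>x0 x1 xm xm1::bit. (x0 + s * xm + t * xm1) * xm + (x1 + t * xm + u * xm1) * xm1
      + c0 * (x0 + s * xm + t * xm1) + c1 * (x1 + t * xm + u * xm1)
     = x0 * xm + x1 * xm1 + c0 * x0 + c1 * x1 + xm * (s + s*c0 + t*c1) + xm1 * (u + c0*t + c1*u)
       + 2 * (t * xm * xm1) + (xm*xm - xm) * s + (xm1*xm1 - xm1) * u"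
    by algebra
  have key: "\<And>xm xm1. s * xm + (u * xm1 + (c0 * (s * xm) + (c1 * (t * xm) + (c0 * (t * xm1) + c1 * (u * xm1))))) = 0"
  proof -
    fix xm xm1 :: bit
    have "s * xm + (u * xm1 + (c0 * (s * xm) + (c1 * (t * xm) + (c0 * (t * xm1) + c1 * (u * xm1))))) = xm * (s + s*c0 + t*c1) + xm1 * (u + c0*t + c1*u)" by algebra
    then show "s * xm + (u * xm1 + (c0 * (s * xm) + (c1 * (t * xm) + (c0 * (t * xm1) + c1 * (u * xm1))))) = 0" using h1 h2 by simp
  qed
  show ?thesis
    unfolding Qf_def using m
    apply (simp add: sum_split e)
    apply (simp add: M_def)
    using alg[of "x 0" "x m" "x (Suc m)" "x 1"] h1 h2 key[of "x m" "x (Suc m)"] by (simp add: bit_sq algebra_simps)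
qed

lemma ex_bit: "(\<exists>c::bit. P c) \<longleftrightarrow> P 0 \<or> P 1"
  by (metis bit_not_zero_iff)

lemma exc: "\<exists>c0 c1::bit. s + s*c0 + t*c1 = 0 \<and> u + c0*t + c1*u = 0"
  by (cases s; cases t; cases u) (simp_all add: ex_bit)

lemma partB:
  assumes m: "2 \<le> m"
  shows "\<exists>Q. quad_form m Q \<and> arf m Q = 0 \<and> fixes_form m (Mr m s t u) Q"
proof -
  obtain c0 c1 :: bit where h: "s + s*c0 + t*c1 = 0" "u + c0*t + c1*u = 0" using exc by blast
  have "fixes_form m (Mr m s t u) (Qf m c0 c1)"
    unfolding fixes_form_def
  proof
    fix x assume x: "x \<in> vecs m"
    have "inv_into (vecs m) (Mr m s t u) x = M m s t u x"
    proof -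
      have "x = Mr m s t u (M m s t u x)" using x m by (simp add: Mr_apply M_vecs M_invol)
      then have "inv_into (vecs m) (Mr m s t u) x = inv_into (vecs m) (Mr m s t u) (Mr m s t u (M m s t u x))" by simp
      also have "\<dots> = M m s t u x" using inv_into_f_f[OF Mr_inj[OF m] M_vecs[OF m x]] .
      finally show ?thesis .
    qed
    then show "Qf m c0 c1 (inv_into (vecs m) (Mr m s t u) x) = Qf m c0 c1 x"
      using Qf_M[OF m h] by simp
  qed
  then show ?thesis using Qf_quad Qf_arf[OF m] by blast
qed

theorem mainTheorem11:
  fixes m :: nat
  assumes "m \<ge> 3"
  shows "\<exists>G. subgroup G (Sp_group m) \<and>
    \<not> (\<exists>Q. quad_form m Q \<and> arf m Q = 0 \<and> (\<forall>g\<in>G. fixes_form m g Q)) \<and>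
    (\<forall>g\<in>G. \<exists>Q. quad_form m Q \<and> arf m Q = 0 \<and> fixes_form m g Q)"
proof (intro exI conjI)
  have m: "2 \<le> m" using assms by simp
  show "subgroup (GG m) (Sp_group m)" by (rule GG_subgroup[OF m])
  show "\<not> (\<exists>Q. quad_form m Q \<and> arf m Q = 0 \<and> (\<forall>g\<in>GG m. fixes_form m g Q))"
  proof
    assume "\<exists>Q. quad_form m Q \<and> arf m Q = 0 \<and> (\<forall>g\<in>GG m. fixes_form m g Q)"
    then obtain Q where Q: "quad_form m Q" and f: "\<forall>g\<in>GG m. fixes_form m g Q" by blast
    have "Mr m 1 1 1 \<in> GG m" "Mr m 1 0 1 \<in> GG m" by (auto simp: GG_def)
    with f have "fixes_form m (Mr m 1 1 1) Q" "fixes_form m (Mr m 1 0 1) Q" by auto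
    then show False using partA[OF m Q] by blast
  qed
  show "\<forall>g\<in>GG m. \<exists>Q. quad_form m Q \<and> arf m Q = 0 \<and> fixes_form m g Q"
    using partB[OF m] by (auto simp: GG_def)
qed

end
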